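(* Let $\lambda<0$, $a>0$, $c\in\mathbb{R}$, and let $\Omega=[\omega^-,\omega^+]$ with $\omega^-<0<\omega^+$. Consider the control system on $\mathbb{R}^2$ $$\dot s=\omega,\qquad \dot t=\lambda t+\omega(c+as),\qquad \omega\in\Omega .$$ For $\omega\in\Omega$ define $F_\omega:\mathbb{R}^2\to\mathbb{R}$, $F_\omega(s,t)=\lambda^2 t+\omega\big(\lambda(c+as)+a\omega\big)$. Let $\mathbf v_a=(-c/a,0)$; for constant control $\omega$ the solution from $\mathbf v_a$ is $\varphi(\tau,\mathbf v_a,\omega)=\big(-\tfrac ca+\tau\omega,\ \tfrac{a\omega^2}{\lambda^2}(e^{\lambda\tau}-\lambda\tau-1)\big)$. Define $$\mathcal C^-=\{\mathbf v\in\mathbb{R}^2: F_{\omega^-}(\mathbf v)<0\text{ and }F_{\omega^+}(\mathbf v)<0\},$$ $$\mathcal C^+=\{(s,t)\in\mathbb{R}^2:\ \exists\,\tau\ge 0,\ \exists\,\omega\in\{\omega^-,\omega^+\}\text{ with } s=\varphi_1(\tau,\mathbf v_a,\omega)\text{ and } t>\varphi_2(\tau,\mathbf v_a,\omega)\}.$$ Then: (1) $\mathcal C^-$ and $\mathcal C^+$ are invariant in negative time: for every constant control $\omega\in\Omega$, every $\mathbf v$ in the set and every $\tau\le 0$, $\varphi(\tau,\mathbf v,\omega)$ lies in the same set. (2) For any $\omega_1,\omega_2\in\Omega$ with $\omega_1<0<\omega_2$, the region $\mathcal C(\omega_1,\omega_2)=\{\mathbf v\in\mathbb{R}^2: F_{\omega_1}(\mathbf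 v)\,F_{\omega_2}(\mathbf v)<0\}$ is controllable, i.e. for any $\mathbf v,\mathbf w\in\mathcal C(\omega_1,\omega_2)$ there exist a piecewise constant control $\omega(\cdot)$ with values in $\Omega$ and $\tau\ge0$ with $\varphi(\tau,\mathbf v,\omega)=\mathbf w$.
   Context: $\varphi(\tau,\mathbf v,\omega)=(\varphi_1,\varphi_2)$ denotes the solution of the system at time $\tau$ starting at $\mathbf v$ with control $\omega$ (controls are piecewise constant functions with values in $\Omega$). *)

theory Defs
  imports "HOL-Analysis.Analysis"
begin

text \<open>System: s' = w, t' = lam t + w (c + a s). Points are pairs (s,t).
  Flow for a constant control w, time tau (any sign), closed form of the linear ODE.\<close>
definition flow :: "real \<Rightarrow> real \<Rightarrow> real \<Rightarrow> real \<Rightarrow> real \<Rightarrow> real \<times> real \<Rightarrow> real \<times> real" where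
  "flow lam a c w tau v =
     (let s0 = fst v; t0 = snd v; u = c + a * s0;
          A = - a * w\<^sup>2 / lam\<^sup>2 - w * u / lam;
          B = - a * w\<^sup>2 / lam
      in (s0 + tau * w, (t0 - A) * exp (lam * tau) + A + B * tau))"

text \<open>Piecewise constant control: a finite list of (value, duration) pieces,
  applied in order. The solution at the total time is obtained by composing flows.\<close>
fun flow_pc :: "real \<Rightarrow> real \<Rightarrow> real \<Rightarrow> (real \<times> real) list \<Rightarrow> real \<times> real \<Rightarrow> real \<times> real" where
  "flow_pc lam a c [] v = v"
| "flow_pc lam a c ((w, d) # ps) v = flow_pc lam a c ps (flow lam a c w d v)"

definition admissible_pc :: "real set \<Rightarrow> (real \<times> real) list \<Rightarrow> bool" where
  "admissible_pc Om ps \<longleftrightarrow> (\<forall>(w, d) \<in> set ps. w \<in> Om \<and> 0 \<le> d)"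

definition total_time :: "(real \<times> real) list \<Rightarrow> real" where
  "total_time ps = sum_list (map snd ps)"

definition Ffun :: "real \<Rightarrow> real \<Rightarrow> real \<Rightarrow> real \<Rightarrow> real \<times> real \<Rightarrow> real" where
  "Ffun lam a c w v = lam\<^sup>2 * snd v + w * (lam * (c + a * fst v) + a * w)"

definition va :: "real \<Rightarrow> real \<Rightarrow> real \<times> real" where
  "va a c = (- c / a, 0)"

definition Cminus :: "real \<Rightarrow> real \<Rightarrow> real \<Rightarrow> real \<Rightarrow> real \<Rightarrow> (real \<times> real) set" where
  "Cminus lam a c wm wp = {v. Ffun lam a c wm v < 0 \<and> Ffun lam a c wp v < 0}"

definition Cplus :: "real \<Rightarrow> real \<Rightarrow> real \<Rightarrow> real \<Rightarrow> real \<Rightarrow> (real \<times> real) set" where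
  "Cplus lam a c wm wp = {(s, t). \<exists>tau \<ge> 0. \<exists>w \<in> {wm, wp}.
      s = fst (flow lam a c w tau (va a c)) \<and> t > snd (flow lam a c w tau (va a c))}"

definition Creg :: "real \<Rightarrow> real \<Rightarrow> real \<Rightarrow> real \<Rightarrow> real \<Rightarrow> (real \<times> real) set" where
  "Creg lam a c w1 w2 = {v. Ffun lam a c w1 v * Ffun lam a c w2 v < 0}"

end

theory Submission
  imports Defs
begin


lemma exp_quad_lower:
  fixes x :: real assumes "0 \<le> x" shows "1 + x + x^2/2 \<le> exp x"
proof -
  have "(\<lambda>x. exp x - 1 - x - x^2/2) 0 \<le> (\<lambda>x. exp x - 1 - x - x^2/2) x"
    apply (rule DERIV_nonneg_imp_nondecreasing[OF assms])
    apply (rule exI[where x="exp _ - 1 - _"])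
    apply (auto intro!: derivative_eq_intros)
    by (smt (verit) exp_ge_add_one_self)
  then show ?thesis by simp
qed

lemma exp_quad_upper:
  fixes x :: real assumes "x \<le> 0" shows "exp x \<le> 1 + x + x^2/2"
proof -
  have "(\<lambda>x. 1 + x + x^2/2 - exp x) x \<ge> (\<lambda>x. 1 + x + x^2/2 - exp x) 0"
    apply (rule DERIV_nonpos_imp_nonincreasing[OF assms])
    apply (rule exI[where x="1 + _ - exp _"])
    apply (auto intro!: derivative_eq_intros)
    done
  then show ?thesis by simp
qed

lemma exp_beats_linear:
  fixes K c A B lo :: real assumes "K > 0" "c > 0"
  shows "\<exists>x\<ge>lo. A + B * x \<le> K * exp (c * x)"
proof -
  define x where "x = max lo (max 1 (2*(\<bar>A\<bar>+\<bar>B\<bar>)/(K*c^2)))"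
  have x1: "x \<ge> 1" and x2: "x \<ge> 2*(\<bar>A\<bar>+\<bar>B\<bar>)/(K*c^2)" and x0: "x \<ge> lo" unfolding x_def by auto
  have Kc: "K*c^2 > 0" using assms by simp
  have "2*(\<bar>A\<bar>+\<bar>B\<bar>) \<le> K*c^2*x" using x2 Kc by (simp add: divide_le_eq mult.commute)
  hence "(\<bar>A\<bar>+\<bar>B\<bar>) * x \<le> K*c^2*x*x/2" using x1 mult_right_mono[of "2*(\<bar>A\<bar>+\<bar>B\<bar>)" "K*c^2*x" x] by simp
  moreover have "A + B*x \<le> (\<bar>A\<bar>+\<bar>B\<bar>) * x"
  proof -
    have "\<bar>A\<bar> \<le> \<bar>A\<bar> * x" using x1 by (simp add: mult_le_cancel_left1)
    hence "A \<le> \<bar>A\<bar> * x" by linarith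
    moreover have "B*x \<le> \<bar>B\<bar>*x" using x1 by (simp add: mult_right_mono)
    ultimately show ?thesis by (simp add: distrib_right)
  qed
  moreover have "K*c^2*x*x/2 \<le> K * exp (c*x)"
  proof -
    have cx: "0 \<le> c*x" using assms x1 by simp
    have "(c*x)^2/2 \<le> exp (c*x)" using exp_quad_lower[OF cx] cx by linarith
    hence "K*((c*x)^2/2) \<le> K*exp (c*x)" using assms by simp
    thus ?thesis by (simp add: power2_eq_square algebra_simps)
  qed
  ultimately show ?thesis using x0 by (intro exI[of _ x]) auto
qed

definition Af :: "real \<Rightarrow> real \<Rightarrow> real \<Rightarrow> real \<Rightarrow> real \<Rightarrow> real" where
  "Af lam a c w x = - a * w\<^sup>2 / lam\<^sup>2 - w * (c + a * x) / lam"

lemma flow_fst[simp]: "fst (flow lam a c w tau v) = fst v + tau * w"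
  by (simp add: flow_def Let_def)

lemma flow_snd: "snd (flow lam a c w tau v) = (snd v - Af lam a c w (fst v)) * exp (lam * tau) + Af lam a c w (fst v + tau * w)"
  by (cases "lam = 0") (simp_all add: flow_def Let_def Af_def field_simps power2_eq_square)

lemma flow_snd_diff: "snd (flow lam a c w tau (s, t1)) - snd (flow lam a c w tau (s, t2)) = exp (lam * tau) * (t1 - t2)"
  by (simp add: flow_snd algebra_simps)

lemma flow_add: "flow lam a c w t1 (flow lam a c w t2 v) = flow lam a c w (t1 + t2) v"
proof -
  have "snd (flow lam a c w t1 (flow lam a c w t2 v)) = snd (flow lam a c w (t1 + t2) v)"
    by (simp add: flow_snd exp_add algebra_simps)
  moreover have "fst (flow lam a c w t1 (flow lam a c w t2 v)) = fst (flow lam a c w (t1 + t2) v)"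
    by (simp add: algebra_simps)
  ultimately show ?thesis by (metis prod.expand)
qed

lemma F_Af: "lam \<noteq> 0 \<Longrightarrow> Ffun lam a c w v = lam\<^sup>2 * (snd v - Af lam a c w (fst v))"
  by (simp add: Ffun_def Af_def field_simps power2_eq_square)

lemma F_flow: "lam \<noteq> 0 \<Longrightarrow> Ffun lam a c w' (flow lam a c w tau v) =
   Ffun lam a c w' v + Ffun lam a c w v * (exp (lam * tau) - 1) + lam * a * w * (w' - w) * tau"
  by (simp add: Ffun_def flow_snd Af_def field_simps power2_eq_square)



lemma lin_neg:
  fixes g0 g1 w wm wp :: real
  assumes "wm < wp" "w \<in> {wm..wp}" "(wp - wm) * G = (wp - w) * g0 + (w - wm) * g1" "g0 < 0" "g1 < 0"
  shows "G < 0"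
proof -
  have "(wp - w) * g0 \<le> 0" using assms by (simp add: mult_nonneg_nonpos)
  moreover have "(w - wm) * g1 \<le> 0" using assms by (simp add: mult_nonneg_nonpos)
  moreover have "(wp - w) * g0 < 0 \<or> (w - wm) * g1 < 0"
    using assms by (cases "w = wp") (auto simp: mult_pos_neg mult_neg_pos)
  ultimately have "(wp - wm) * G < 0" using assms(3) by linarith
  thus ?thesis using assms(1) by (simp add: mult_less_0_iff)
qed

lemma Cminus_inv:
  fixes lam a c wm wp w tau :: real
  assumes lam: "lam < 0" and a: "a > 0" and wm: "wm < 0" and wp: "0 < wp"
    and w: "w \<in> {wm..wp}" and v: "v \<in> Cminus lam a c wm wp" and tau: "tau \<le> 0"
  shows "flow lam a c w tau v \<in> Cminus lam a c wm wp"
proof -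
  obtain s t where vst: "v = (s, t)" by (cases v)
  define Fm where "Fm = Ffun lam a c wm v"
  define Fp where "Fp = Ffun lam a c wp v"
  define Fw where "Fw = Ffun lam a c w v"
  have Fm: "Fm < 0" and Fp: "Fp < 0" using v by (auto simp: Cminus_def Fm_def Fp_def)
  have wmp: "wm < wp" using wm wp by simp
  have "(wp - wm) * (Fw - a*(w-wm)*(w-wp)) = (wp - w) * Fm + (w - wm) * Fp"
    unfolding Fw_def Fm_def Fp_def Ffun_def by (simp add: algebra_simps power2_eq_square)
  hence "Fw - a*(w-wm)*(w-wp) < 0" by (rule lin_neg[OF wmp w _ Fm Fp])
  moreover have "a*(w-wm)*(w-wp) \<le> 0" using a w by (simp add: mult_nonneg_nonpos)
  ultimately have Fw: "Fw < 0" by linarith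
  define x where "x = lam * tau"
  have x0: "0 \<le> x" using lam tau unfolding x_def by (simp add: mult_nonpos_nonpos)
  have "x \<le> exp x - 1" using exp_ge_add_one_self[of x] by linarith
  hence FwE: "Fw * (exp x - 1) \<le> Fw * x" using Fw by (simp add: mult_left_mono_neg)
  have key: "Ffun lam a c w' (flow lam a c w tau v) < 0"
    if "Ffun lam a c w' v < 0" and "Fw + a * w * (w' - w) < 0" for w'
  proof -
    have "Ffun lam a c w' (flow lam a c w tau v) = Ffun lam a c w' v + Fw * (exp x - 1) + x * (a * w * (w' - w))"
      using F_flow[of lam a c w' w tau v] lam unfolding Fw_def x_def by (simp add: algebra_simps)
    also have "\<dots> \<le> Ffun lam a c w' v + x * (Fw + a * w * (w' - w))"
      using FwE by (simp add: algebra_simps)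
    also have "\<dots> \<le> Ffun lam a c w' v"
      using x0 that(2) by (simp add: mult_nonneg_nonpos)
    finally show ?thesis using that(1) by linarith
  qed
  have Gm: "Fw + a * w * (wm - w) < 0"
  proof (rule lin_neg[OF wmp w _ Fm])
    show "(wp - wm) * (Fw + a * w * (wm - w)) = (wp - w) * Fm + (w - wm) * (Fp - a * wp * (wp - wm))"
      unfolding Fw_def Fm_def Fp_def Ffun_def by (simp add: algebra_simps power2_eq_square)
    have "0 < a * wp * (wp - wm)" using a wp wmp by simp
    then show "Fp - a * wp * (wp - wm) < 0" using Fp by linarith
  qed
  have Gp: "Fw + a * w * (wp - w) < 0"
  proof (rule lin_neg[OF wmp w _ _ Fp])
    show "(wp - wm) * (Fw + a * w * (wp - w)) = (wp - w) * (Fm + a * wm * (wp - wm)) + (w - wm) * Fp"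
      unfolding Fw_def Fm_def Fp_def Ffun_def by (simp add: algebra_simps power2_eq_square)
    have "a * wm * (wp - wm) < 0" using a wm wmp by (simp add: mult_pos_neg mult_neg_pos)
    then show "Fm + a * wm * (wp - wm) < 0" using Fm by linarith
  qed
  show ?thesis unfolding Cminus_def using key[OF _ Gm] key[OF _ Gp] Fm Fp
    unfolding Fm_def Fp_def by auto
qed



definition gf :: "real \<Rightarrow> real \<Rightarrow> real \<Rightarrow> real \<Rightarrow> real \<Rightarrow> real" where
  "gf lam a c w s = a * w\<^sup>2 / lam\<^sup>2 * (exp (lam * (s + c / a) / w) - lam * (s + c / a) / w - 1)"

lemma flow_va_snd: "a \<noteq> 0 \<Longrightarrow> snd (flow lam a c w tau (va a c)) = a * w\<^sup>2 / lam\<^sup>2 * (exp (lam * tau) - lam * tau - 1)"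
  by (cases "lam = 0") (simp_all add: flow_snd va_def Af_def field_simps power2_eq_square)

lemma gf_nonneg: "0 \<le> gf lam a c w s" if "0 \<le> a"
proof -
  have "0 \<le> exp (lam * (s + c / a) / w) - lam * (s + c / a) / w - 1"
    using exp_ge_add_one_self[of "lam * (s + c / a) / w"] by linarith
  thus ?thesis unfolding gf_def using that by simp
qed

lemma gf_quad:
  assumes "w \<noteq> 0" "lam \<noteq> 0"
  shows "gf lam a c w s - a * (s + c / a)^2 / 2 = a * w\<^sup>2 / lam\<^sup>2 *
     (exp (lam * (s + c / a) / w) - 1 - lam * (s + c / a) / w - (lam * (s + c / a) / w)^2 / 2)"
  using assms unfolding gf_def by (simp add: field_simps power2_eq_square)

lemma gf_ge: assumes "w \<noteq> 0" "lam \<noteq> 0" "a \<ge> 0" "0 \<le> lam * (s + c / a) / w"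
  shows "a * (s + c / a)^2 / 2 \<le> gf lam a c w s"
proof -
  have "0 \<le> exp (lam * (s + c / a) / w) - 1 - lam * (s + c / a) / w - (lam * (s + c / a) / w)^2 / 2"
    using exp_quad_lower[OF assms(4)] by linarith
  hence "0 \<le> a * w\<^sup>2 / lam\<^sup>2 * (exp (lam * (s + c / a) / w) - 1 - lam * (s + c / a) / w - (lam * (s + c / a) / w)^2 / 2)"
    using assms by simp
  thus ?thesis using gf_quad[OF assms(1,2), of a c s] by linarith
qed

lemma gf_le: assumes "w \<noteq> 0" "lam \<noteq> 0" "a \<ge> 0" "lam * (s + c / a) / w \<le> 0"
  shows "gf lam a c w s \<le> a * (s + c / a)^2 / 2"
proof -
  have "exp (lam * (s + c / a) / w) - 1 - lam * (s + c / a) / w - (lam * (s + c / a) / w)^2 / 2 \<le> 0" (is "?E \<le> 0")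
    using exp_quad_upper[OF assms(4)] by linarith
  have "a * w\<^sup>2 / lam\<^sup>2 * (exp (lam * (s + c / a) / w) - 1 - lam * (s + c / a) / w - (lam * (s + c / a) / w)^2 / 2) \<le> 0"
    by (rule mult_nonneg_nonpos[OF _ \<open>?E \<le> 0\<close>]) (use assms in simp)
  thus ?thesis using gf_quad[OF assms(1,2), of a c s] by linarith
qed

lemma Cplus_iff:
  assumes "a > 0" "wm \<noteq> 0" "wp \<noteq> 0"
  shows "v \<in> Cplus lam a c wm wp \<longleftrightarrow>
    (\<exists>w0\<in>{wm, wp}. 0 \<le> (fst v + c / a) / w0 \<and> gf lam a c w0 (fst v) < snd v)"
proof
  assume "v \<in> Cplus lam a c wm wp"
  then obtain tau w0 where tau: "tau \<ge> 0" and w0: "w0 \<in> {wm, wp}"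
    and s: "fst v = fst (flow lam a c w0 tau (va a c))" and t: "snd v > snd (flow lam a c w0 tau (va a c))"
    unfolding Cplus_def by (cases v) auto
  have w0nz: "w0 \<noteq> 0" using w0 assms by auto
  have "fst v = - c / a + tau * w0" using s by (simp add: va_def)
  hence taueq: "tau = (fst v + c / a) / w0" using w0nz by (simp add: field_simps)
  have "snd (flow lam a c w0 tau (va a c)) = gf lam a c w0 (fst v)"
    unfolding flow_va_snd[OF order.strict_implies_not_eq[OF assms(1), symmetric]] gf_def taueq
    by (simp add: field_simps)
  thus "\<exists>w0\<in>{wm, wp}. 0 \<le> (fst v + c / a) / w0 \<and> gf lam a c w0 (fst v) < snd v"
    using w0 tau t taueq by auto
next
  assume "\<exists>w0\<in>{wm, wp}. 0 \<le> (fst v + c / a) / w0 \<and> gf lam a c w0 (fst v) < snd v"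
  then obtain w0 where w0: "w0 \<in> {wm, wp}" and tau: "0 \<le> (fst v + c / a) / w0" and t: "gf lam a c w0 (fst v) < snd v"
    by auto
  define tau where "tau = (fst v + c / a) / w0"
  have w0nz: "w0 \<noteq> 0" using w0 assms by auto
  have e1: "fst v = fst (flow lam a c w0 tau (va a c))"
    using w0nz assms(1) by (simp add: va_def tau_def field_simps)
  have "snd (flow lam a c w0 tau (va a c)) = gf lam a c w0 (fst v)"
    unfolding flow_va_snd[OF order.strict_implies_not_eq[OF assms(1), symmetric]] gf_def tau_def
    by (simp add: field_simps)
  then show "v \<in> Cplus lam a c wm wp"
    unfolding Cplus_def using w0 tau e1 t tau_def by (cases v) force
qed



lemma psi_deriv:
  fixes lam a c w w0 s t :: real
  assumes lam: "lam \<noteq> 0" and w0: "w0 \<noteq> 0" and a: "a \<noteq> 0"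
  shows "((\<lambda>tau. (t - Af lam a c w s) + (Af lam a c w (s + tau * w) - gf lam a c w0 (s + tau * w)) * exp (- lam * tau))
     has_real_derivative
     (exp (- lam * tau) * (a * w0 * (w0 - w) / lam * (exp (lam * (s + tau * w + c / a) / w0) - lam * (s + tau * w + c / a) / w0 - 1)))) (at tau)"
proof -
  define X where "X = lam * (s + tau * w + c / a) / w0"
  have dA: "((\<lambda>tau. Af lam a c w (s + tau * w)) has_real_derivative (- a * w * w / lam)) (at tau)"
    unfolding Af_def using lam by (auto intro!: derivative_eq_intros simp: field_simps)
  have dg: "((\<lambda>tau. gf lam a c w0 (s + tau * w)) has_real_derivative
      (a * w0\<^sup>2 / lam\<^sup>2 * (exp X * (lam * w / w0) - lam * w / w0))) (at tau)"
    unfolding gf_def X_def using lam w0 by (auto intro!: derivative_eq_intros simp: field_simps)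
  have dE: "((\<lambda>tau. exp (- lam * tau)) has_real_derivative (- lam * exp (- lam * tau))) (at tau)"
    by (auto intro!: derivative_eq_intros)
  have d: "((\<lambda>tau. (t - Af lam a c w s) + (Af lam a c w (s + tau * w) - gf lam a c w0 (s + tau * w)) * exp (- lam * tau))
     has_real_derivative
     (0 + ((- a * w * w / lam - a * w0\<^sup>2 / lam\<^sup>2 * (exp X * (lam * w / w0) - lam * w / w0)) * exp (- lam * tau)
       + (- lam * exp (- lam * tau)) * (Af lam a c w (s + tau * w) - gf lam a c w0 (s + tau * w))))) (at tau)"
    by (rule DERIV_add[OF DERIV_const DERIV_mult[OF DERIV_diff[OF dA dg] dE]])
  have "0 + ((- a * w * w / lam - a * w0\<^sup>2 / lam\<^sup>2 * (exp X * (lam * w / w0) - lam * w / w0)) * exp (- lam * tau)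
       + (- lam * exp (- lam * tau)) * (Af lam a c w (s + tau * w) - gf lam a c w0 (s + tau * w)))
     = exp (- lam * tau) * (a * w0 * (w0 - w) / lam * (exp X - X - 1))"
    unfolding Af_def gf_def X_def using lam w0 a by (simp add: field_simps power2_eq_square)
  from DERIV_cong[OF d this] show ?thesis unfolding X_def .
qed

lemma gf_flow_mono:
  fixes lam a c w w0 tau :: real
  assumes lam: "lam < 0" and a: "a > 0" and w0: "w0 \<noteq> 0" and ww: "0 \<le> w0 * (w0 - w)" and tau: "tau \<le> 0"
    and v: "gf lam a c w0 (fst v) < snd v"
  shows "gf lam a c w0 (fst (flow lam a c w tau v)) < snd (flow lam a c w tau v)"
proof -
  obtain s t where vst: "v = (s, t)" by (cases v)
  define \<psi> where "\<psi> = (\<lambda>tau. (t - Af lam a c w s) + (Af lam a c w (s + tau * w) - gf lam a c w0 (s + tau * w)) * exp (- lam * tau))"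
  have "\<psi> tau \<ge> \<psi> 0"
  proof (rule DERIV_nonpos_imp_nonincreasing[OF tau])
    fix x assume "tau \<le> x" "x \<le> 0"
    let ?X = "lam * (s + x * w + c / a) / w0"
    have "0 \<le> exp ?X - ?X - 1" using exp_ge_add_one_self[of ?X] by linarith
    moreover have "a * w0 * (w0 - w) / lam \<le> 0"
      using a ww lam by (intro divide_nonneg_neg) (simp_all add: mult.assoc)
    ultimately have "a * w0 * (w0 - w) / lam * (exp ?X - ?X - 1) \<le> 0"
      by (metis mult_nonpos_nonneg)
    hence "exp (- lam * x) * (a * w0 * (w0 - w) / lam * (exp ?X - ?X - 1)) \<le> 0"
      by (rule mult_nonneg_nonpos[OF less_imp_le[OF exp_gt_zero]])
    then show "\<exists>y. (\<psi> has_real_derivative y) (at x) \<and> y \<le> 0"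
      unfolding \<psi>_def using psi_deriv[of lam w0 a t c w s x] lam w0 a by auto
  qed
  moreover have "\<psi> 0 = t - gf lam a c w0 s" unfolding \<psi>_def by simp
  moreover have "\<psi> tau = (snd (flow lam a c w tau v) - gf lam a c w0 (s + tau * w)) * exp (- lam * tau)"
  proof -
    have "exp (lam * tau) * exp (- lam * tau) = 1" by (simp add: exp_minus[symmetric] exp_add[symmetric])
    then show ?thesis unfolding \<psi>_def vst flow_snd by (simp add: algebra_simps)
  qed
  ultimately have "0 < (snd (flow lam a c w tau v) - gf lam a c w0 (s + tau * w)) * exp (- lam * tau)"
    using v vst by simp
  hence "0 < snd (flow lam a c w tau v) - gf lam a c w0 (s + tau * w)"
    by (simp add: zero_less_mult_iff)
  thus ?thesis using vst by simp
qed

lemma switch_side: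
  fixes lam a c w0 w1 s t :: real
  assumes lam: "lam < 0" and a: "a > 0" and w0: "w0 \<noteq> 0" and w1: "w1 \<noteq> 0"
    and neg: "(s + c / a) / w0 < 0" and pos: "0 \<le> (s + c / a) / w1"
    and t: "gf lam a c w0 s < t"
  shows "gf lam a c w1 s < t"
proof -
  have "0 \<le> lam * (s + c / a) / w0"
    using mult_nonpos_nonpos[of lam "(s + c / a) / w0"] lam neg by simp
  hence "a * (s + c / a)^2 / 2 \<le> gf lam a c w0 s" using gf_ge[OF w0 _ _] lam a by simp
  moreover have "lam * (s + c / a) / w1 \<le> 0"
    using mult_nonpos_nonneg[of lam "(s + c / a) / w1"] lam pos by simp
  hence "gf lam a c w1 s \<le> a * (s + c / a)^2 / 2" using gf_le[OF w1 _ _] lam a by simp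
  ultimately show ?thesis using t by linarith
qed

lemma Cplus_inv:
  fixes lam a c wm wp w tau :: real
  assumes lam: "lam < 0" and a: "a > 0" and wm: "wm < 0" and wp: "0 < wp"
    and w: "w \<in> {wm..wp}" and v: "v \<in> Cplus lam a c wm wp" and tau: "tau \<le> 0"
  shows "flow lam a c w tau v \<in> Cplus lam a c wm wp"
proof -
  have nz: "wm \<noteq> 0" "wp \<noteq> 0" using wm wp by auto
  obtain w0 where w0: "w0 \<in> {wm, wp}" and g: "gf lam a c w0 (fst v) < snd v"
    using v unfolding Cplus_iff[OF a nz] by blast
  define v' where "v' = flow lam a c w tau v"
  have w0nz: "w0 \<noteq> 0" using w0 nz by auto
  have ww: "0 \<le> w0 * (w0 - w)" using w0 w wm wp by (auto simp: mult_nonpos_nonpos)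
  have m: "gf lam a c w0 (fst v') < snd v'"
    unfolding v'_def by (rule gf_flow_mono[OF lam a w0nz ww tau g])
  show ?thesis
  proof (cases "0 \<le> (fst v' + c / a) / w0")
    case True
    then show ?thesis using w0 m unfolding v'_def[symmetric] Cplus_iff[OF a nz] by blast
  next
    case False
    hence neg: "(fst v' + c / a) / w0 < 0" by simp
    show ?thesis
    proof (cases "w0 = wm")
      case True
      have "0 \<le> (fst v' + c / a) / wp" using neg True wm wp by (simp add: divide_less_0_iff)
      moreover from switch_side[OF lam a w0nz nz(2) neg this m] have "gf lam a c wp (fst v') < snd v'" .
      ultimately show ?thesis unfolding v'_def[symmetric] Cplus_iff[OF a nz] by blast
    next
      case False
      hence "w0 = wp" using w0 by auto
      have "0 \<le> (fst v' + c / a) / wm" using neg \<open>w0 = wp\<close> wm wp by (simp add: divide_less_0_iff divide_nonpos_neg)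
      moreover from switch_side[OF lam a w0nz nz(1) neg this m] have "gf lam a c wm (fst v') < snd v'" .
      ultimately show ?thesis unfolding v'_def[symmetric] Cplus_iff[OF a nz] by blast
    qed
  qed
qed



lemma flow_zero[simp]: "flow lam a c w 0 v = v"
  by (simp add: flow_def Let_def)

lemma orbit_snd: "w \<noteq> 0 \<Longrightarrow> snd (flow lam a c w ((x - fst v) / w) v) =
   (snd v - Af lam a c w (fst v)) * exp (lam * ((x - fst v) / w)) + Af lam a c w x"
  by (simp add: flow_snd)

lemma orbit_fst: "w \<noteq> 0 \<Longrightarrow> fst (flow lam a c w ((x - fst v) / w) v) = x"
  by simp

lemma zero_between:
  fixes f :: "real \<Rightarrow> real"
  assumes "a \<le> b" "f a * f b \<le> 0" "\<And>x. isCont f x"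
  shows "\<exists>x. a \<le> x \<and> x \<le> b \<and> f x = 0"
proof (cases "f a \<le> 0")
  case True
  hence "0 \<le> f b \<or> f a = 0" using assms(2) by (auto simp: mult_le_0_iff)
  then show ?thesis
  proof
    assume "0 \<le> f b" then show ?thesis using IVT[of f a 0 b] True assms by auto
  next
    assume "f a = 0" then show ?thesis using assms by auto
  qed
next
  case False
  hence "f b \<le> 0" using assms(2) by (auto simp: mult_le_0_iff)
  then show ?thesis using IVT2[of f b 0 a] False assms by auto
qed

lemma grow_lo:
  fixes K gam alpha beta R m s0 :: real and r :: "real \<Rightarrow> real"
  assumes K: "K \<noteq> 0" and gam: "gam > 0" and r: "\<And>x. x \<le> m \<Longrightarrow> \<bar>r x\<bar> \<le> R"
  shows "\<exists>x\<le>m. 0 \<le> K * (K * exp (gam * (s0 - x)) + alpha + beta * x + r x)"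
proof (cases "K > 0")
  case True
  obtain y where y: "y \<ge> s0 - m" and yy: "(R - alpha - beta * s0) + beta * y \<le> K * exp (gam * y)"
    using exp_beats_linear[where K=K and c=gam and A="R - alpha - beta * s0" and B=beta and lo="s0 - m"] True gam by blast
  define x where "x = s0 - y"
  have xm: "x \<le> m" using y x_def by simp
  have "0 \<le> K * exp (gam * (s0 - x)) + alpha + beta * x + r x"
    using yy r[OF xm] unfolding x_def by (simp add: algebra_simps abs_le_iff)
  then show ?thesis using xm True by (intro exI[of _ x]) simp
next
  case False
  hence Kn: "- K > 0" using K by simp
  obtain y where y: "y \<ge> s0 - m" and yy: "(alpha + beta * s0 + R) + (- beta) * y \<le> - K * exp (gam * y)"
    using exp_beats_linear[where K="- K" and c=gam and A="alpha + beta * s0 + R" and B="- beta" and lo="s0 - m"] Kn gam by blast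
  define x where "x = s0 - y"
  have xm: "x \<le> m" using y x_def by simp
  have "K * exp (gam * (s0 - x)) + alpha + beta * x + r x \<le> 0"
    using yy r[OF xm] unfolding x_def by (simp add: algebra_simps abs_le_iff)
  then show ?thesis using xm False by (intro exI[of _ x]) (simp add: mult_nonpos_nonpos)
qed

lemma grow_hi:
  fixes K gam alpha beta R m s0 :: real and r :: "real \<Rightarrow> real"
  assumes K: "K \<noteq> 0" and gam: "gam > 0" and r: "\<And>x. m \<le> x \<Longrightarrow> \<bar>r x\<bar> \<le> R"
  shows "\<exists>x\<ge>m. 0 \<le> K * (K * exp (gam * (x - s0)) + alpha + beta * x + r x)"
proof -
  have "\<exists>x\<le>-m. 0 \<le> K * (K * exp (gam * ((- s0) - x)) + alpha + (- beta) * x + r (- x))"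
    by (rule grow_lo[where R=R and m="- m" and r="\<lambda>x. r (- x)", OF K gam]) (use r in auto)
  then obtain x where "x \<le> - m" "0 \<le> K * (K * exp (gam * ((- s0) - x)) + alpha + (- beta) * x + r (- x))" by blast
  moreover have "gam * ((- s0) - x) = gam * (- x - s0)" by (simp add: algebra_simps)
  ultimately show ?thesis by (intro exI[of _ "- x"]) simp
qed



lemma reach2:
  fixes lam a c w1 w2 :: real and v u :: "real \<times> real"
  assumes lam: "lam < 0" and w1: "w1 < 0" and w2: "0 < w2"
    and u: "Ffun lam a c w1 u * Ffun lam a c w2 u < 0"
  shows "\<exists>tau\<ge>0. \<exists>s\<ge>0. flow lam a c w2 s (flow lam a c w1 tau v) = u \<or> flow lam a c w1 s (flow lam a c w2 tau v) = u"
proof -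
  obtain sv tv where vd: "v = (sv, tv)" by (cases v)
  obtain su tu where ud: "u = (su, tu)" by (cases u)
  have w1nz: "w1 \<noteq> 0" and w2nz: "w2 \<noteq> 0" and lamnz: "lam \<noteq> 0" using w1 w2 lam by auto
  define DA where "DA x = snd (flow lam a c w2 ((x - su) / w2) u) - snd (flow lam a c w1 ((x - sv) / w1) v)" for x
  define DB where "DB x = snd (flow lam a c w2 ((x - sv) / w2) v) - snd (flow lam a c w1 ((x - su) / w1) u)" for x
  define K2 where "K2 = tu - Af lam a c w2 su"
  define K1 where "K1 = tu - Af lam a c w1 su"
  define K1v where "K1v = tv - Af lam a c w1 sv"
  define K2v where "K2v = tv - Af lam a c w2 sv"
  define al where "al = - a * w2\<^sup>2 / lam\<^sup>2 - w2 * c / lam + a * w1\<^sup>2 / lam\<^sup>2 + w1 * c / lam"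
  define be where "be = - w2 * a / lam + w1 * a / lam"
  have Afd: "Af lam a c w2 x - Af lam a c w1 x = al + be * x" for x
    unfolding Af_def al_def be_def using lamnz by (simp add: field_simps)
  have DAe: "DA x = K2 * exp (lam * ((x - su) / w2)) + (al + be * x) - K1v * exp (lam * ((x - sv) / w1))" for x
    unfolding DA_def K2_def K1v_def using orbit_snd[OF w2nz, of lam a c x u] orbit_snd[OF w1nz, of lam a c x v] Afd[of x]
    unfolding vd ud by simp
  have DBe: "DB x = (- K1) * exp (lam * ((x - su) / w1)) + (al + be * x) + K2v * exp (lam * ((x - sv) / w2))" for x
    unfolding DB_def K1_def K2v_def using orbit_snd[OF w1nz, of lam a c x u] orbit_snd[OF w2nz, of lam a c x v] Afd[of x]
    unfolding vd ud by (simp add: algebra_simps)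
  have cA: "isCont DA x" for x
  proof -
    have "DA = (\<lambda>x. K2 * exp (lam * ((x - su) / w2)) + (al + be * x) - K1v * exp (lam * ((x - sv) / w1)))"
      using DAe by (intro ext)
    then show ?thesis using w1nz w2nz by (auto intro!: continuous_intros)
  qed
  have cB: "isCont DB x" for x
  proof -
    have "DB = (\<lambda>x. (- K1) * exp (lam * ((x - su) / w1)) + (al + be * x) + K2v * exp (lam * ((x - sv) / w2)))"
      using DBe by (intro ext)
    then show ?thesis using w1nz w2nz by (auto intro!: continuous_intros)
  qed
  have F2: "Ffun lam a c w2 u = lam\<^sup>2 * K2" unfolding K2_def F_Af[OF lamnz] ud by simp
  have F1: "Ffun lam a c w1 u = lam\<^sup>2 * K1" unfolding K1_def F_Af[OF lamnz] ud by simp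
  have KK: "K1 * K2 < 0"
  proof -
    have "lam\<^sup>2 * lam\<^sup>2 * (K1 * K2) < 0" using u unfolding F1 F2 by (simp add: algebra_simps)
    moreover have "lam\<^sup>2 * lam\<^sup>2 > 0" using lamnz by simp
    ultimately show ?thesis by (simp add: mult_less_0_iff)
  qed
  hence K2nz: "K2 \<noteq> 0" and K1nz: "- K1 \<noteq> 0" by auto
  define m where "m = min su sv"
  define M where "M = max su sv"
  have LA: "\<exists>x\<le>m. 0 \<le> K2 * DA x"
  proof -
    have gam: "- lam / w2 > 0" using lam w2 by (simp add: divide_neg_pos)
    have "\<exists>x\<le>m. 0 \<le> K2 * (K2 * exp ((- lam / w2) * (su - x)) + al + be * x + (- K1v * exp (lam * ((x - sv) / w1))))"
    proof (rule grow_lo[OF K2nz gam])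
      fix x assume "x \<le> m"
      hence "x - sv \<le> 0" unfolding m_def by simp
      hence "0 \<le> (x - sv) / w1" using w1 by (simp add: divide_nonpos_neg)
      hence "lam * ((x - sv) / w1) \<le> 0" using lam mult_nonpos_nonneg[of lam "(x - sv) / w1"] by linarith
      hence "exp (lam * ((x - sv) / w1)) \<le> 1" by simp
      then show "\<bar>- K1v * exp (lam * ((x - sv) / w1))\<bar> \<le> \<bar>K1v\<bar>"
        by (simp add: abs_mult mult_left_le)
    qed
    moreover have "(- lam / w2) * (su - x) = lam * ((x - su) / w2)" for x using w2nz by (simp add: field_simps)
    ultimately show ?thesis unfolding DAe by (simp add: algebra_simps)
  qed
  have LB: "\<exists>x\<ge>M. 0 \<le> (- K1) * DB x"
  proof -
    have gam: "lam / w1 > 0" using lam w1 by (simp add: divide_neg_neg)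
    have "\<exists>x\<ge>M. 0 \<le> (- K1) * ((- K1) * exp ((lam / w1) * (x - su)) + al + be * x + (K2v * exp (lam * ((x - sv) / w2))))"
    proof (rule grow_hi[OF K1nz gam])
      fix x assume "M \<le> x"
      hence "0 \<le> x - sv" unfolding M_def by simp
      hence "0 \<le> (x - sv) / w2" using w2 by simp
      hence "lam * ((x - sv) / w2) \<le> 0" using lam mult_nonpos_nonneg[of lam "(x - sv) / w2"] by linarith
      hence "exp (lam * ((x - sv) / w2)) \<le> 1" by simp
      then show "\<bar>K2v * exp (lam * ((x - sv) / w2))\<bar> \<le> \<bar>K2v\<bar>"
        by (simp add: abs_mult mult_left_le)
    qed
    moreover have "(lam / w1) * (x - su) = lam * ((x - su) / w1)" for x using w1nz by (simp add: field_simps)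
    ultimately show ?thesis unfolding DBe by (simp add: algebra_simps)
  qed
  have comp: "DA m * DB M \<le> 0"
  proof (cases "sv \<le> su")
    case True
    hence mM: "m = sv" "M = su" unfolding m_def M_def by auto
    define T where "T = (su - sv) / w2"
    define q where "q = flow lam a c w2 ((sv - su) / w2) u"
    have fq: "fst q = sv" unfolding q_def ud using w1nz w2nz by simp
    have "T + (sv - su) / w2 = 0" unfolding T_def using w2nz by (simp add: field_simps)
    hence uq: "flow lam a c w2 T q = u" unfolding q_def flow_add by simp
    have qd: "q = (sv, snd q)" using fq by (metis prod.collapse)
    have uq': "flow lam a c w2 T (sv, snd q) = u" using uq qd by metis
    have e1: "DA m = snd q - tv" unfolding mM DA_def q_def vd by simp
    have "DB M = snd (flow lam a c w2 T (sv, tv)) - snd (flow lam a c w2 T (sv, snd q))"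
      unfolding mM DB_def T_def vd using uq'[unfolded T_def] by (simp add: ud)
    hence e2: "DB M = exp (lam * T) * (tv - snd q)" by (simp add: flow_snd_diff)
    have "DA m * DB M = - (exp (lam * T) * ((snd q - tv) * (snd q - tv)))" unfolding e1 e2 by (simp add: algebra_simps)
    moreover have "0 \<le> exp (lam * T) * ((snd q - tv) * (snd q - tv))" by simp
    ultimately show ?thesis by linarith
  next
    case False
    hence mM: "m = su" "M = sv" unfolding m_def M_def by auto
    define T where "T = (su - sv) / w1"
    define q where "q = flow lam a c w1 ((sv - su) / w1) u"
    have fq: "fst q = sv" unfolding q_def ud using w1nz w2nz by simp
    have "T + (sv - su) / w1 = 0" unfolding T_def using w1nz by (simp add: field_simps)
    hence uq: "flow lam a c w1 T q = u" unfolding q_def flow_add by simp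
    have qd: "q = (sv, snd q)" using fq by (metis prod.collapse)
    have uq': "flow lam a c w1 T (sv, snd q) = u" using uq qd by metis
    have e1: "DB M = tv - snd q" unfolding mM DB_def q_def vd by simp
    have "DA m = snd (flow lam a c w1 T (sv, snd q)) - snd (flow lam a c w1 T (sv, tv))"
      unfolding mM DA_def T_def vd using uq'[unfolded T_def] by (simp add: ud)
    hence e2: "DA m = exp (lam * T) * (snd q - tv)" by (simp add: flow_snd_diff)
    have "DA m * DB M = - (exp (lam * T) * ((snd q - tv) * (snd q - tv)))" unfolding e1 e2 by (simp add: algebra_simps)
    moreover have "0 \<le> exp (lam * T) * ((snd q - tv) * (snd q - tv))" by simp
    ultimately show ?thesis by linarith
  qed
  have patA: ?thesis if x: "x \<le> m" "DA x = 0" for x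
  proof -
    define tau where "tau = (x - sv) / w1"
    define s where "s = (su - x) / w2"
    have tau0: "0 \<le> tau" unfolding tau_def using x(1) w1 unfolding m_def by (simp add: divide_nonpos_neg)
    have s0: "0 \<le> s" unfolding s_def using x(1) w2 unfolding m_def by simp
    have PQ: "flow lam a c w1 tau v = flow lam a c w2 ((x - su) / w2) u"
      using x(2) unfolding DA_def tau_def vd ud using w1nz w2nz by (intro prod_eqI) simp_all
    have "s + (x - su) / w2 = 0" unfolding s_def using w2nz by (simp add: field_simps)
    hence "flow lam a c w2 s (flow lam a c w1 tau v) = u" unfolding PQ flow_add by simp
    then show ?thesis using tau0 s0 by blast
  qed
  have patB: ?thesis if x: "M \<le> x" "DB x = 0" for x
  proof -
    define tau where "tau = (x - sv) / w2"
    define s where "s = (su - x) / w1"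
    have tau0: "0 \<le> tau" unfolding tau_def using x(1) w2 unfolding M_def by simp
    have s0: "0 \<le> s" unfolding s_def using x(1) w1 unfolding M_def by (simp add: divide_nonpos_neg)
    have PQ: "flow lam a c w2 tau v = flow lam a c w1 ((x - su) / w1) u"
      using x(2) unfolding DB_def tau_def vd ud using w1nz w2nz by (intro prod_eqI) simp_all
    have "s + (x - su) / w1 = 0" unfolding s_def using w1nz by (simp add: field_simps)
    hence "flow lam a c w1 s (flow lam a c w2 tau v) = u" unfolding PQ flow_add by simp
    then show ?thesis using tau0 s0 by blast
  qed
  obtain x0 where x0: "x0 \<le> m" "0 \<le> K2 * DA x0" using LA by blast
  obtain x1 where x1: "M \<le> x1" "0 \<le> (- K1) * DB x1" using LB by blast
  show ?thesis
  proof (cases "K2 * DA m \<le> 0")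
    case True
    have "(K2 * DA x0) * (K2 * DA m) \<le> 0" using x0(2) True by (simp add: mult_nonneg_nonpos)
    hence "K2\<^sup>2 * (DA x0 * DA m) \<le> 0" by (simp add: power2_eq_square algebra_simps)
    hence "DA x0 * DA m \<le> 0" using K2nz by (simp add: mult_le_0_iff)
    from zero_between[OF x0(1) this cA] obtain x where "x0 \<le> x" "x \<le> m" "DA x = 0" by blast
    then show ?thesis using patA by blast
  next
    case False
    hence pos: "0 < K2 * DA m" by simp
    have "(K2 * K2) * (DA m * DB M) \<le> 0"
      by (rule mult_nonneg_nonpos[OF _ comp]) simp
    hence "(K2 * DA m) * (K2 * DB M) \<le> 0" by (simp add: algebra_simps)
    hence "K2 * DB M \<le> 0" using pos mult_pos_pos[of "K2 * DA m" "K2 * DB M"] by linarith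
    moreover have "0 \<le> K2 * DB x1"
    proof -
      have "0 < (- K1) * K2" using KK by simp
      hence "0 \<le> ((- K1) * K2) * (K2 * DB x1)" using x1(2)
        by (metis mult.assoc mult.left_commute mult_nonneg_nonneg zero_le_square less_imp_le power2_eq_square)
      thus ?thesis using \<open>0 < (- K1) * K2\<close> mult_pos_neg[of "(- K1) * K2" "K2 * DB x1"] by linarith
    qed
    ultimately have "(K2 * DB M) * (K2 * DB x1) \<le> 0" by (simp add: mult_nonpos_nonneg)
    hence "K2\<^sup>2 * (DB M * DB x1) \<le> 0" by (simp add: power2_eq_square algebra_simps)
    hence "DB M * DB x1 \<le> 0" using K2nz by (simp add: mult_le_0_iff)
    from zero_between[OF x1(1) this cB] obtain x where "M \<le> x" "x \<le> x1" "DB x = 0" by blast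
    then show ?thesis using patB by blast
  qed
qed


theorem lemma1:
  fixes lam a c wm wp :: real
  assumes "lam < 0" and "a > 0" and "wm < 0" and "0 < wp"
  shows "(\<forall>w \<in> {wm..wp}. \<forall>v \<in> Cminus lam a c wm wp. \<forall>tau \<le> 0.
            flow lam a c w tau v \<in> Cminus lam a c wm wp)
       \<and> (\<forall>w \<in> {wm..wp}. \<forall>v \<in> Cplus lam a c wm wp. \<forall>tau \<le> 0.
            flow lam a c w tau v \<in> Cplus lam a c wm wp)
       \<and> (\<forall>w1 \<in> {wm..wp}. \<forall>w2 \<in> {wm..wp}. w1 < 0 \<and> 0 < w2 \<longrightarrow>
            (\<forall>v \<in> Creg lam a c w1 w2. \<forall>u \<in> Creg lam a c w1 w2.
               \<exists>ps. admissible_pc {wm..wp} ps \<and> 0 \<le> total_time ps \<and>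
                    flow_pc lam a c ps v = u))"
proof -
  have P1: "\<forall>w \<in> {wm..wp}. \<forall>v \<in> Cminus lam a c wm wp. \<forall>tau \<le> 0.
            flow lam a c w tau v \<in> Cminus lam a c wm wp"
    using Cminus_inv[OF assms] by blast
  have P2: "\<forall>w \<in> {wm..wp}. \<forall>v \<in> Cplus lam a c wm wp. \<forall>tau \<le> 0.
            flow lam a c w tau v \<in> Cplus lam a c wm wp"
    using Cplus_inv[OF assms] by blast
  have P3: "\<forall>w1 \<in> {wm..wp}. \<forall>w2 \<in> {wm..wp}. w1 < 0 \<and> 0 < w2 \<longrightarrow>
            (\<forall>v \<in> Creg lam a c w1 w2. \<forall>u \<in> Creg lam a c w1 w2.
               \<exists>ps. admissible_pc {wm..wp} ps \<and> 0 \<le> total_time ps \<and>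
                    flow_pc lam a c ps v = u)"
  proof (intro ballI impI)
    fix w1 w2 v u
    assume w1: "w1 \<in> {wm..wp}" and w2: "w2 \<in> {wm..wp}" and ww: "w1 < 0 \<and> 0 < w2"
      and v: "v \<in> Creg lam a c w1 w2" and u: "u \<in> Creg lam a c w1 w2"
    have "Ffun lam a c w1 u * Ffun lam a c w2 u < 0" using u by (simp add: Creg_def)
    from reach2[OF assms(1) _ _ this, of v] ww obtain tau s where
      ts: "tau \<ge> 0" "s \<ge> 0" and
      fl: "flow lam a c w2 s (flow lam a c w1 tau v) = u \<or> flow lam a c w1 s (flow lam a c w2 tau v) = u"
      by blast
    from fl show "\<exists>ps. admissible_pc {wm..wp} ps \<and> 0 \<le> total_time ps \<and> flow_pc lam a c ps v = u"
    proof
      assume "flow lam a c w2 s (flow lam a c w1 tau v) = u"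
      then show ?thesis using w1 w2 ts
        by (intro exI[of _ "[(w1, tau), (w2, s)]"]) (simp add: admissible_pc_def total_time_def)
    next
      assume "flow lam a c w1 s (flow lam a c w2 tau v) = u"
      then show ?thesis using w1 w2 ts
        by (intro exI[of _ "[(w2, tau), (w1, s)]"]) (simp add: admissible_pc_def total_time_def)
    qed
  qed
  show ?thesis using P1 P2 P3 by blast
qed

end
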